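(* For every infinite cardinal $\theta$ the following are equivalent: (1) $\theta<\mathfrak{r}$. (2) For every singular cardinal $\kappa$ of countable cofinality and every set $A\subseteq[\kappa]^\omega$ consisting of cofinal subsets of $\kappa$ with $|A|\le\theta$, there is $E\subseteq\kappa$ such that for every $a\in A$, both $a\cap E$ and $a\setminus E$ are infinite. (3) There is a singular cardinal $\kappa$ of countable cofinality such that for every set $A\subseteq[\kappa]^\omega$ consisting of cofinal subsets of $\kappa$ with $|A|\le\theta$, there is $E\subseteq\kappa$ such that for every $a\in A$, both $a\cap E$ and $a\setminus E$ are infinite.
   Context: The reaping number $\mathfrak{r}$ is the least cardinality of a set $A\subseteq[\omega]^\omega$ such that for every $b\in[\omega]^\omega$ there is $a\in A$ with $a\setminus b$ or $a\cap b$ finite. *)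

theory Defs
  imports Main "HOL-Library.Countable_Set"
begin

definition reaping_family :: "nat set set \<Rightarrow> bool" where
  "reaping_family A \<longleftrightarrow> (\<forall>a\<in>A. infinite a) \<and>
     (\<forall>b. infinite b \<longrightarrow> (\<exists>a\<in>A. finite (a - b) \<or> finite (a \<inter> b)))"

text \<open>theta < r : theta is strictly below the cardinality of every reaping family
  (the reaping number being the least such cardinality).  The cardinal theta is
  given as the cardinality of a set T.\<close>
definition below_reaping :: "'t set \<Rightarrow> bool" where
  "below_reaping T \<longleftrightarrow> (\<forall>A. reaping_family A \<longrightarrow> (card_of T, card_of A) \<in> ordLess)"

text \<open>A cardinal kappa is represented by a set K with a cardinal well-order r on it.\<close>
definition cofinal_in :: "'k rel \<Rightarrow> 'k set \<Rightarrow> 'k set \<Rightarrow> bool" where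
  "cofinal_in r K a \<longleftrightarrow> a \<subseteq> K \<and> (\<forall>x\<in>K. \<exists>y\<in>a. (x, y) \<in> r)"

definition singular_cof_omega :: "'k set \<Rightarrow> 'k rel \<Rightarrow> bool" where
  "singular_cof_omega K r \<longleftrightarrow> card_order_on K r \<and> uncountable K \<and>
     (\<exists>c. countable c \<and> cofinal_in r K c)"

definition splits_small_cofinal :: "'t set \<Rightarrow> 'k set \<Rightarrow> 'k rel \<Rightarrow> bool" where
  "splits_small_cofinal T K r \<longleftrightarrow>
     (\<forall>A. (\<forall>a\<in>A. a \<subseteq> K \<and> countable a \<and> infinite a \<and> cofinal_in r K a)
          \<longrightarrow> (card_of A, card_of T) \<in> ordLeq
          \<longrightarrow> (\<exists>E\<subseteq>K. \<forall>a\<in>A. infinite (a \<inter> E) \<and> infinite (a - E)))"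

end

theory Submission
  imports Defs
begin

lemma wo_facts:
  assumes "card_order_on K r"
  shows "K = Field r" "\<And>x. x \<in> K \<Longrightarrow> (x,x) \<in> r"
    "\<And>x y z. (x,y) \<in> r \<Longrightarrow> (y,z) \<in> r \<Longrightarrow> (x,z) \<in> r"
    "\<And>x y. (x,y) \<in> r \<Longrightarrow> (y,x) \<in> r \<Longrightarrow> x = y"
    "\<And>x y. x \<in> K \<Longrightarrow> y \<in> K \<Longrightarrow> x \<noteq> y \<Longrightarrow> (x,y) \<in> r \<or> (y,x) \<in> r"
    "\<And>x y. (x,y) \<in> r \<Longrightarrow> x \<in> K \<and> y \<in> K"
proof -
  have K: "K = Field r" using card_order_on_Card_order[OF assms] by blast
  have w: "well_order_on K r" using card_order_on_well_order_on[OF assms] .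
  show "K = Field r" by (rule K)
  show "\<And>x. x \<in> K \<Longrightarrow> (x,x) \<in> r" using w
    unfolding well_order_on_def linear_order_on_def partial_order_on_def preorder_on_def refl_on_def by blast
  show "\<And>x y z. (x,y) \<in> r \<Longrightarrow> (y,z) \<in> r \<Longrightarrow> (x,z) \<in> r" using w
    unfolding well_order_on_def linear_order_on_def partial_order_on_def preorder_on_def trans_def by blast
  show "\<And>x y. (x,y) \<in> r \<Longrightarrow> (y,x) \<in> r \<Longrightarrow> x = y" using w
    unfolding well_order_on_def linear_order_on_def partial_order_on_def antisym_def by blast
  show "\<And>x y. x \<in> K \<Longrightarrow> y \<in> K \<Longrightarrow> x \<noteq> y \<Longrightarrow> (x,y) \<in> r \<or> (y,x) \<in> r" using w
    unfolding well_order_on_def linear_order_on_def total_on_def by blast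
  show "\<And>x y. (x,y) \<in> r \<Longrightarrow> x \<in> K \<and> y \<in> K" using K unfolding Field_def by blast
qed

lemma nomax:
  assumes "card_order_on K r" "infinite K" "x \<in> K"
  shows "\<exists>y\<in>K. x \<noteq> y \<and> (x,y) \<in> r"
  using infinite_Card_order_limit[of r x] card_order_on_Card_order[OF assms(1)] assms by auto

lemma seq_exists:
  assumes "singular_cof_omega K r"
  shows "\<exists>d :: nat \<Rightarrow> 'k. (\<forall>n. d n \<in> K) \<and> (\<forall>n m. n < m \<longrightarrow> (d n, d m) \<in> r \<and> d n \<noteq> d m)
          \<and> (\<forall>x\<in>K. \<exists>n. (x, d n) \<in> r)"
proof -
  have co: "card_order_on K r" and unc: "uncountable K" and
    "\<exists>c. countable c \<and> cofinal_in r K c" using assms unfolding singular_cof_omega_def by auto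
  then obtain c where cc: "countable c" and cof: "cofinal_in r K c" by blast
  note W = wo_facts[OF co]
  have inf: "infinite K" using unc countable_finite by blast
  then obtain x0 where "x0 \<in> K" using infinite_imp_nonempty by blast
  then have cne: "c \<noteq> {}" using cof unfolding cofinal_in_def by blast
  define e where "e = from_nat_into c"
  have ec: "\<And>n. e n \<in> c" unfolding e_def by (rule from_nat_into[OF cne])
  have ce: "\<And>y. y \<in> c \<Longrightarrow> \<exists>n. e n = y" unfolding e_def using from_nat_into_surj[OF cc] by blast
  have cK: "c \<subseteq> K" using cof unfolding cofinal_in_def by blast
  define up where "up = (\<lambda>x. SOME y. y \<in> K \<and> x \<noteq> y \<and> (x,y) \<in> r)"
  have upP: "\<And>x. x \<in> K \<Longrightarrow> up x \<in> K \<and> x \<noteq> up x \<and> (x, up x) \<in> r"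
  proof -
    fix x assume "x \<in> K"
    then have "\<exists>y. y \<in> K \<and> x \<noteq> y \<and> (x,y) \<in> r" using nomax[OF co inf] by blast
    then show "up x \<in> K \<and> x \<noteq> up x \<and> (x, up x) \<in> r" unfolding up_def by (rule someI_ex)
  qed
  define mx where "mx = (\<lambda>x y. if (x,y) \<in> r then y else x)"
  have mxP: "\<And>x y. x \<in> K \<Longrightarrow> y \<in> K \<Longrightarrow> mx x y \<in> K \<and> (x, mx x y) \<in> r \<and> (y, mx x y) \<in> r"
  proof -
    fix x y assume xK: "x \<in> K" and yK: "y \<in> K"
    show "mx x y \<in> K \<and> (x, mx x y) \<in> r \<and> (y, mx x y) \<in> r"
    proof (cases "(x,y) \<in> r")
      case True then show ?thesis unfolding mx_def using yK W(2)[OF yK] by simp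
    next
      case False
      then have "x \<noteq> y" using W(2)[OF xK] by blast
      then have "(y,x) \<in> r" using W(5)[OF xK yK] False by blast
      then show ?thesis unfolding mx_def using False xK W(2)[OF xK] by simp
    qed
  qed
  define d where "d = rec_nat (e 0) (\<lambda>n dn. up (mx dn (e (Suc n))))"
  have d0: "d 0 = e 0" and dS: "\<And>n. d (Suc n) = up (mx (d n) (e (Suc n)))" unfolding d_def by auto
  have dK: "\<And>n. d n \<in> K \<and> (e n, d n) \<in> r"
  proof -
    fix n show "d n \<in> K \<and> (e n, d n) \<in> r"
    proof (induction n)
      case 0 then show ?case using d0 ec cK W(2) by auto
    next
      case (Suc n)
      have "e (Suc n) \<in> K" using ec cK by blast
      then have m: "mx (d n) (e (Suc n)) \<in> K \<and> (e (Suc n), mx (d n) (e (Suc n))) \<in> r"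
        using mxP Suc by blast
      have u: "d (Suc n) \<in> K \<and> (mx (d n) (e (Suc n)), d (Suc n)) \<in> r"
        using dS upP m by metis
      then show ?case using W(3)[of "e (Suc n)" "mx (d n) (e (Suc n))" "d (Suc n)"] m by blast
    qed
  qed
  have step: "\<And>n. (d n, d (Suc n)) \<in> r \<and> d n \<noteq> d (Suc n)"
  proof -
    fix n
    have "e (Suc n) \<in> K" using ec cK by blast
    then have m: "mx (d n) (e (Suc n)) \<in> K \<and> (d n, mx (d n) (e (Suc n))) \<in> r"
      using mxP dK by blast
    define M where "M = mx (d n) (e (Suc n))"
    have mM: "M \<in> K" "(d n, M) \<in> r" using m M_def by auto
    have dSM: "d (Suc n) = up M" using dS M_def by simp
    have u: "up M \<in> K" "M \<noteq> up M" "(M, up M) \<in> r" using upP[OF mM(1)] by auto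
    have r1: "(d n, d (Suc n)) \<in> r" unfolding dSM by (rule W(3)[OF mM(2) u(3)])
    moreover have "d n \<noteq> d (Suc n)"
    proof
      assume "d n = d (Suc n)"
      then have "(up M, M) \<in> r" using mM(2) dSM by simp
      then have "up M = M" using u(3) by (rule W(4))
      then show False using u(2) by simp
    qed
    ultimately show "(d n, d (Suc n)) \<in> r \<and> d n \<noteq> d (Suc n)" by blast
  qed
  have mono: "\<And>n k. (d n, d (n + k)) \<in> r"
  proof -
    fix n k show "(d n, d (n + k)) \<in> r"
    proof (induction k)
      case 0 then show ?case using dK W(2) by auto
    next
      case (Suc k) then show ?case using step[of "n+k"] W(3)[of "d n" "d (n+k)" "d (Suc (n+k))"] by simp
    qed
  qed
  have lt: "\<And>n m. n < m \<Longrightarrow> (d n, d m) \<in> r \<and> d n \<noteq> d m"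
  proof -
    fix n m :: nat assume "n < m"
    define k where "k = m - Suc n"
    have mk: "m = Suc n + k" using \<open>n < m\<close> k_def by simp
    have a: "(d (Suc n), d m) \<in> r" using mono[of "Suc n" k] mk by simp
    have b: "(d n, d m) \<in> r" using a step[of n] W(3)[of "d n" "d (Suc n)" "d m"] by blast
    have "d n \<noteq> d m"
    proof
      assume "d n = d m"
      then have "(d (Suc n), d n) \<in> r" using a by simp
      then have "d (Suc n) = d n" using step[of n] by (intro W(4)) auto
      then show False using step[of n] by simp
    qed
    then show "(d n, d m) \<in> r \<and> d n \<noteq> d m" using b by blast
  qed
  have cf: "\<forall>x\<in>K. \<exists>n. (x, d n) \<in> r"
  proof
    fix x assume "x \<in> K"
    then obtain y where "y \<in> c" "(x,y) \<in> r" using cof unfolding cofinal_in_def by blast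
    then obtain n where en: "e n = y" using ce by blast
    have "(y, d n) \<in> r" using dK[of n] en by simp
    then have "(x, d n) \<in> r" using W(3)[OF \<open>(x,y) \<in> r\<close>] by simp
    then show "\<exists>n. (x, d n) \<in> r" by (rule exI)
  qed
  have dK': "\<forall>n. d n \<in> K" using dK by simp
  have lt': "\<forall>n m. n < m \<longrightarrow> (d n, d m) \<in> r \<and> d n \<noteq> d m" using lt by simp
  show ?thesis using dK' lt' cf by blast
qed

lemma dir1:
  fixes T :: "'t set" and K :: "'k set"
  assumes br: "below_reaping T" and sg: "singular_cof_omega K r"
  shows "splits_small_cofinal T K r"
proof -
  have co: "card_order_on K r" using sg unfolding singular_cof_omega_def by blast
  note W = wo_facts[OF co]
  obtain d :: "nat \<Rightarrow> 'k" where dK: "\<forall>n. d n \<in> K"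
    and lt: "\<forall>n m. n < m \<longrightarrow> (d n, d m) \<in> r \<and> d n \<noteq> d m"
    and cf: "\<forall>x\<in>K. \<exists>n. (x, d n) \<in> r" using seq_exists[OF sg] by blast
  define f where "f = (\<lambda>x. LEAST n. (x, d n) \<in> r)"
  have fP: "\<And>x. x \<in> K \<Longrightarrow> (x, d (f x)) \<in> r"
  proof -
    fix x assume "x \<in> K"
    then have "\<exists>n. (x, d n) \<in> r" using cf by blast
    then show "(x, d (f x)) \<in> r" unfolding f_def by (rule LeastI_ex)
  qed
  have le: "\<And>n m. n \<le> m \<Longrightarrow> (d n, d m) \<in> r"
  proof -
    fix n m :: nat assume "n \<le> m"
    then show "(d n, d m) \<in> r"
    proof (cases "n = m")
      case True then show ?thesis using W(2) dK by simp
    next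
      case False then show ?thesis using lt \<open>n \<le> m\<close> by simp
    qed
  qed
  have finf: "\<And>a. a \<subseteq> K \<Longrightarrow> cofinal_in r K a \<Longrightarrow> infinite (f ` a)"
  proof
    fix a assume aK: "a \<subseteq> K" and ca: "cofinal_in r K a" and fin: "finite (f ` a)"
    then obtain N where N: "\<forall>n\<in>f ` a. n \<le> N" using finite_nat_set_iff_bounded_le by blast
    have all: "\<And>x. x \<in> K \<Longrightarrow> (x, d N) \<in> r"
    proof -
      fix x assume "x \<in> K"
      then obtain y where y: "y \<in> a" "(x,y) \<in> r" using ca unfolding cofinal_in_def by blast
      have "(y, d (f y)) \<in> r" using fP y aK by blast
      moreover have "(d (f y), d N) \<in> r" using le N y by blast
      ultimately have "(y, d N) \<in> r" by (rule W(3))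
      then show "(x, d N) \<in> r" using W(3)[OF y(2)] by simp
    qed
    have "(d (Suc N), d N) \<in> r" using all dK by blast
    moreover have "(d N, d (Suc N)) \<in> r" "d N \<noteq> d (Suc N)" using lt by auto
    ultimately show False using W(4) by blast
  qed
  show ?thesis unfolding splits_small_cofinal_def
  proof (intro allI impI)
    fix A :: "'k set set"
    assume hA: "\<forall>a\<in>A. a \<subseteq> K \<and> countable a \<and> infinite a \<and> cofinal_in r K a"
      and cA: "(card_of A, card_of T) \<in> ordLeq"
    define S where "S = (\<lambda>a. f ` a) ` A"
    have "(card_of S, card_of A) \<in> ordLeq" unfolding S_def by (rule card_of_image)
    then have cS: "(card_of S, card_of T) \<in> ordLeq" using cA ordLeq_transitive by blast
    have nr: "\<not> reaping_family S"
    proof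
      assume "reaping_family S"
      then have "(card_of T, card_of S) \<in> ordLess" using br unfolding below_reaping_def by blast
      then show False using cS not_ordLess_ordLeq by blast
    qed
    have Sinf: "\<forall>s\<in>S. infinite s" unfolding S_def using hA finf by blast
    then obtain b where b: "infinite b" "\<forall>s\<in>S. \<not> finite (s - b) \<and> \<not> finite (s \<inter> b)"
      using nr unfolding reaping_family_def by blast
    define E where "E = {x\<in>K. f x \<in> b}"
    show "\<exists>E\<subseteq>K. \<forall>a\<in>A. infinite (a \<inter> E) \<and> infinite (a - E)"
    proof (intro exI[of _ E] conjI ballI)
      show "E \<subseteq> K" unfolding E_def by blast
    next
      fix a assume aA: "a \<in> A"
      then have aK: "a \<subseteq> K" using hA by blast
      have fa: "f ` a \<in> S" unfolding S_def using aA by blast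
      have s1: "f ` a \<inter> b \<subseteq> f ` (a \<inter> E)" unfolding E_def using aK by blast
      have s2: "f ` a - b \<subseteq> f ` (a - E)" unfolding E_def by blast
      have "infinite (f ` a \<inter> b)" using b(2) fa by blast
      then have "infinite (f ` (a \<inter> E))" using s1 finite_subset by blast
      then show "infinite (a \<inter> E)" using finite_imageI by blast
    next
      fix a assume aA: "a \<in> A"
      have fa: "f ` a \<in> S" unfolding S_def using aA by blast
      have s2: "f ` a - b \<subseteq> f ` (a - E)" unfolding E_def by blast
      have "infinite (f ` a - b)" using b(2) fa by blast
      then have "infinite (f ` (a - E))" using s2 finite_subset by blast
      then show "infinite (a - E)" using finite_imageI by blast
    qed
  qed
qed

lemma dir2:
  fixes T :: "'t set" and K :: "'k set"
  assumes sg: "singular_cof_omega K r" and sp: "splits_small_cofinal T K r"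
  shows "below_reaping T"
proof -
  have co: "card_order_on K r" using sg unfolding singular_cof_omega_def by blast
  note W = wo_facts[OF co]
  obtain d :: "nat \<Rightarrow> 'k" where dK: "\<forall>n. d n \<in> K"
    and lt: "\<forall>n m. n < m \<longrightarrow> (d n, d m) \<in> r \<and> d n \<noteq> d m"
    and cf: "\<forall>x\<in>K. \<exists>n. (x, d n) \<in> r" using seq_exists[OF sg] by blast
  have injd: "inj d"
  proof (rule injI)
    fix n m assume "d n = d m"
    show "n = m"
    proof (rule ccontr)
      assume "n \<noteq> m"
      then have "n < m \<or> m < n" by arith
      then show False using lt[rule_format, of n m] lt[rule_format, of m n] \<open>d n = d m\<close> by auto
    qed
  qed
  show ?thesis unfolding below_reaping_def
  proof (intro allI impI)
    fix R assume rR: "reaping_family R"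
    show "(card_of T, card_of R) \<in> ordLess"
    proof (rule ccontr)
      assume nl: "(card_of T, card_of R) \<notin> ordLess"
      have cR: "(card_of R, card_of T) \<in> ordLeq"
        using nl not_ordLess_iff_ordLeq[OF card_of_Well_order card_of_Well_order] by blast
      define A where "A = (\<lambda>s. d ` s) ` R"
      have "(card_of A, card_of R) \<in> ordLeq" unfolding A_def by (rule card_of_image)
      then have cA: "(card_of A, card_of T) \<in> ordLeq" using cR ordLeq_transitive by blast
      have hA: "\<forall>a\<in>A. a \<subseteq> K \<and> countable a \<and> infinite a \<and> cofinal_in r K a"
      proof
        fix a assume "a \<in> A"
        then obtain s where s: "s \<in> R" "a = d ` s" unfolding A_def by blast
        have si: "infinite s" using rR s(1) unfolding reaping_family_def by blast
        have "a \<subseteq> K" using s dK by blast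
        moreover have "countable a" using s by simp
        moreover have "infinite a" 
        proof
          assume "finite a"
          then have "finite (d ` s)" using s(2) by simp
          then have "finite s" using finite_imageD[of d s] inj_on_subset[OF injd] by blast
          then show False using si by blast
        qed
        moreover have "cofinal_in r K a" unfolding cofinal_in_def
        proof (intro conjI ballI)
          show "a \<subseteq> K" using s dK by blast
        next
          fix x assume "x \<in> K"
          then obtain n where n: "(x, d n) \<in> r" using cf by blast
          obtain m where m: "m \<in> s" "n < m" using si infinite_nat_iff_unbounded by blast
          have "(d n, d m) \<in> r" using lt m(2) by blast
          then have "(x, d m) \<in> r" using W(3)[OF n] by simp
          then show "\<exists>y\<in>a. (x, y) \<in> r" using s m by blast
        qed
        ultimately show "a \<subseteq> K \<and> countable a \<and> infinite a \<and> cofinal_in r K a" by blast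
      qed
      obtain E where E: "E \<subseteq> K" "\<forall>a\<in>A. infinite (a \<inter> E) \<and> infinite (a - E)"
      proof -
        have "\<exists>E\<subseteq>K. \<forall>a\<in>A. infinite (a \<inter> E) \<and> infinite (a - E)"
          using mp[OF mp[OF spec[OF sp[unfolded splits_small_cofinal_def], of A] hA] cA] .
        then show ?thesis using that by blast
      qed
      define b where "b = {n. d n \<in> E}"
      obtain s where s: "s \<in> R" "finite (s - b) \<or> finite (s \<inter> b)"
      proof (cases "finite b")
        case True
        obtain s where "s \<in> R" using rR unfolding reaping_family_def by blast
        moreover have "finite (s \<inter> b)" using True by simp
        ultimately show ?thesis using that by blast
      next
        case False
        then obtain s where "s \<in> R" "finite (s - b) \<or> finite (s \<inter> b)"
          using rR unfolding reaping_family_def by blast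
        then show ?thesis using that by blast
      qed
      have "d ` s \<in> A" unfolding A_def using s by blast
      then have i: "infinite (d ` s \<inter> E)" "infinite (d ` s - E)" using E by auto
      have ss1: "d ` s \<inter> E \<subseteq> d ` (s \<inter> b)" unfolding b_def by auto
      have ss2: "d ` s - E \<subseteq> d ` (s - b)" unfolding b_def by auto
      show False
      proof (cases "finite (s - b)")
        case True
        then have "finite (d ` s - E)" using finite_subset[OF ss2 finite_imageI[of "s - b" d]] by simp
        then show False using i(2) by simp
      next
        case False
        then have "finite (s \<inter> b)" using s(2) by simp
        then have "finite (d ` s \<inter> E)" using finite_subset[OF ss1 finite_imageI[of "s \<inter> b" d]] by simp
        then show False using i(1) by simp
      qed
    qed
  qed
qed

theorem mainTheorem16:
  fixes T :: "'t set"
  assumes "infinite T"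
    and "\<exists>(K :: 'k set) r. singular_cof_omega K r"
  shows "(below_reaping T \<longleftrightarrow>
            (\<forall>(K :: 'k set) r. singular_cof_omega K r \<longrightarrow> splits_small_cofinal T K r))
       \<and> (below_reaping T \<longleftrightarrow>
            (\<exists>(K :: 'k set) r. singular_cof_omega K r \<and> splits_small_cofinal T K r))"
proof -
  obtain K0 :: "'k set" and r0 where k0: "singular_cof_omega K0 r0" using assms(2) by blast
  have a: "below_reaping T \<Longrightarrow> singular_cof_omega K r \<Longrightarrow> splits_small_cofinal T K r"
    for K :: "'k set" and r by (rule dir1)
  have b: "singular_cof_omega K r \<Longrightarrow> splits_small_cofinal T K r \<Longrightarrow> below_reaping T"
    for K :: "'k set" and r by (rule dir2)
  have L: "below_reaping T \<longleftrightarrow> (\<forall>(K :: 'k set) r. singular_cof_omega K r \<longrightarrow> splits_small_cofinal T K r)"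
  proof
    assume h: "below_reaping T"
    show "\<forall>(K :: 'k set) r. singular_cof_omega K r \<longrightarrow> splits_small_cofinal T K r"
    proof (intro allI impI)
      fix K :: "'k set" and r assume "singular_cof_omega K r"
      then show "splits_small_cofinal T K r" by (rule a[OF h])
    qed
  next
    assume h: "\<forall>(K :: 'k set) r. singular_cof_omega K r \<longrightarrow> splits_small_cofinal T K r"
    have "splits_small_cofinal T K0 r0" using h k0 by simp
    then show "below_reaping T" by (rule b[OF k0])
  qed
  have R: "below_reaping T \<longleftrightarrow> (\<exists>(K :: 'k set) r. singular_cof_omega K r \<and> splits_small_cofinal T K r)"
  proof
    assume h: "below_reaping T"
    have "splits_small_cofinal T K0 r0" by (rule a[OF h k0])
    then show "\<exists>(K :: 'k set) r. singular_cof_omega K r \<and> splits_small_cofinal T K r" using k0 by blast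
  next
    assume "\<exists>(K :: 'k set) r. singular_cof_omega K r \<and> splits_small_cofinal T K r"
    then obtain K :: "'k set" and r where "singular_cof_omega K r" "splits_small_cofinal T K r" by blast
    then show "below_reaping T" by (rule b)
  qed
  show ?thesis using L R by (rule conjI)
qed

end
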